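(* Let $(\mathfrak{X},\pi)$, $a$, $s$, $S$, $m$ be as in the context, let $z\in\mathbb{H}$ and let $F(z)$ be the operator $(F(z)w)_x=|m_x(z)|\int s_{xy}|m_y(z)|w_y\,\pi(\mathrm{d}y)$. Then $\|F(z)\|_2$ is an eigenvalue of $F(z)$ and there exists at least one corresponding non-negative eigenfunction $f(z)\in\mathcal{B}(\mathfrak{X},[0,\infty))$. Any such eigenfunction satisfies \[ \|F(z)\|_2=1-\frac{\langle f(z)|m(z)|\rangle\,\operatorname{Im}z}{\langle f(z)|m(z)|^{-1}\operatorname{Im}m(z)\rangle}. \]
   Context: Let $(\mathfrak{X},\pi)$ be a measure space where $\pi$ is a probability measure; $\mathcal{B}(\mathfrak{X},\mathbb{D})$ denotes bounded measurable $\mathbb{D}$-valued functions; $\langle w\rangle=\int w_x\,\pi(\mathrm{d}x)$. Let $a\in\mathcal{B}(\mathfrak{X},\mathbb{R})$, $s\in\mathcal{B}(\mathfrak{X}^2,[0,\infty))$ symmetric, $(Sw)_x=\int s_{xy}w_y\,\pi(\mathrm{d}y)$. $m:\mathbb{H}\to\mathcal{B}(\mathfrak{X},\mathbb{H})$ is the unique solution of $-1/m(z)=z+a+Sm(z)$, $z\in\mathbb{H}$ (upper half-plane). $\|\cdot\|_2$ is the norm of $L^2(\mathfrak{X},\pi)$ and $\|T\|_2$ the induced operator norm of an operator $T$ on $L^2(\mathfrak{X},\pi)$ (for the symmetric operator $F(z)$ this is its spectral radius). Functions in $\mathcal{B}(\mathfrak{X},\cdot)$ are multiplied and divided pointwise.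 *)

theory Defs
  imports "HOL-Probability.Probability"
begin

definition sq_integrable :: "'a measure \<Rightarrow> ('a \<Rightarrow> real) \<Rightarrow> bool" where
  "sq_integrable M w \<longleftrightarrow> w \<in> borel_measurable M \<and> integrable M (\<lambda>x. (w x)\<^sup>2)"

definition L2norm :: "'a measure \<Rightarrow> ('a \<Rightarrow> real) \<Rightarrow> real" where
  "L2norm M w = sqrt (\<integral>x. (w x)\<^sup>2 \<partial>M)"

definition opnorm2 :: "'a measure \<Rightarrow> (('a \<Rightarrow> real) \<Rightarrow> ('a \<Rightarrow> real)) \<Rightarrow> real" where
  "opnorm2 M T = Sup {L2norm M (T w) | w. sq_integrable M w \<and> L2norm M w \<le> 1}"

definition Fop :: "'a measure \<Rightarrow> ('a \<Rightarrow> 'a \<Rightarrow> real) \<Rightarrow> ('a \<Rightarrow> complex)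
                    \<Rightarrow> ('a \<Rightarrow> real) \<Rightarrow> ('a \<Rightarrow> real)" where
  "Fop M s mz w = (\<lambda>x. cmod (mz x) * (\<integral>y. s x y * cmod (mz y) * w y \<partial>M))"

definition qve_solution :: "'a measure \<Rightarrow> ('a \<Rightarrow> real) \<Rightarrow> ('a \<Rightarrow> 'a \<Rightarrow> real)
                            \<Rightarrow> complex \<Rightarrow> ('a \<Rightarrow> complex) \<Rightarrow> bool" where
  "qve_solution M a s z u \<longleftrightarrow>
     u \<in> borel_measurable M \<and> bounded (u ` space M) \<and>
     (\<forall>x\<in>space M. Im (u x) > 0 \<and>
        - 1 / u x = z + complex_of_real (a x) + (\<integral>y. complex_of_real (s x y) * u y \<partial>M))"

end

theory Submission
  imports Defs
begin

lemma sq_cs_aux: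
  fixes A G X :: real
  assumes A: "A \<ge> 0" and G: "G \<ge> 0"
    and h: "\<And>t. 0 \<le> t\<^sup>2 * A - 2 * t * X + G"
  shows "X \<le> sqrt A * sqrt G"
proof (cases "A = 0")
  case True
  show ?thesis
  proof (rule ccontr)
    assume "\<not> ?thesis"
    hence Xp: "X > 0" using True by simp
    define t where "t = (G + 1) / X"
    have "0 \<le> t\<^sup>2 * A - 2 * t * X + G" by (rule h)
    moreover have "t * X = G + 1" using Xp by (simp add: t_def)
    moreover have "t\<^sup>2 * A = 0" using True by simp
    ultimately show False using G by linarith
  qed
next
  case False
  hence Ap: "A > 0" using A by simp
  have "0 \<le> (X / A)\<^sup>2 * A - 2 * (X / A) * X + G" by (rule h)
  also have "\<dots> = G - X\<^sup>2 / A" using Ap by (simp add: field_simps power2_eq_square)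
  finally have "X\<^sup>2 \<le> A * G" using Ap by (simp add: field_simps)
  hence "X \<le> sqrt (A * G)" by (simp add: real_le_rsqrt)
  thus ?thesis by (simp add: real_sqrt_mult)
qed

lemma integral_cs:
  fixes f g :: "'a \<Rightarrow> real"
  assumes [measurable]: "f \<in> borel_measurable M" "g \<in> borel_measurable M"
    and fi: "integrable M (\<lambda>x. (f x)\<^sup>2)" and gi: "integrable M (\<lambda>x. (g x)\<^sup>2)"
  shows "integrable M (\<lambda>x. \<bar>f x * g x\<bar>)"
    and "(\<integral>x. \<bar>f x * g x\<bar> \<partial>M) \<le> sqrt (\<integral>x. (f x)\<^sup>2 \<partial>M) * sqrt (\<integral>x. (g x)\<^sup>2 \<partial>M)"
proof -
  have sumi: "integrable M (\<lambda>x. (f x)\<^sup>2 + (g x)\<^sup>2)" using fi gi by simp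
  show fgi: "integrable M (\<lambda>x. \<bar>f x * g x\<bar>)"
  proof (rule Bochner_Integration.integrable_bound[OF sumi])
    show "(\<lambda>x. \<bar>f x * g x\<bar>) \<in> borel_measurable M" by measurable
    show "AE x in M. norm \<bar>f x * g x\<bar> \<le> norm ((f x)\<^sup>2 + (g x)\<^sup>2)"
    proof (rule AE_I2)
      fix x
      have "2 * \<bar>f x\<bar> * \<bar>g x\<bar> \<le> (f x)\<^sup>2 + (g x)\<^sup>2"
        using sum_squares_bound[of "\<bar>f x\<bar>" "\<bar>g x\<bar>"] by (simp add: power2_eq_square)
      moreover have "0 \<le> \<bar>f x\<bar> * \<bar>g x\<bar>" by simp
      ultimately have "\<bar>f x\<bar> * \<bar>g x\<bar> \<le> (f x)\<^sup>2 + (g x)\<^sup>2" by linarith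
      thus "norm \<bar>f x * g x\<bar> \<le> norm ((f x)\<^sup>2 + (g x)\<^sup>2)"
        by (simp add: abs_mult)
    qed
  qed
  show "(\<integral>x. \<bar>f x * g x\<bar> \<partial>M) \<le> sqrt (\<integral>x. (f x)\<^sup>2 \<partial>M) * sqrt (\<integral>x. (g x)\<^sup>2 \<partial>M)"
  proof (rule sq_cs_aux)
    show "0 \<le> (\<integral>x. (f x)\<^sup>2 \<partial>M)" "0 \<le> (\<integral>x. (g x)\<^sup>2 \<partial>M)" by simp_all
    fix t :: real
    have "0 \<le> (\<integral>x. (t * \<bar>f x\<bar> - \<bar>g x\<bar>)\<^sup>2 \<partial>M)" by simp
    also have "(\<integral>x. (t * \<bar>f x\<bar> - \<bar>g x\<bar>)\<^sup>2 \<partial>M)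
       = (\<integral>x. t\<^sup>2 * (f x)\<^sup>2 - 2 * t * \<bar>f x * g x\<bar> + (g x)\<^sup>2 \<partial>M)"
      by (rule Bochner_Integration.integral_cong) (auto simp: power2_eq_square abs_mult algebra_simps)
    also have "\<dots> = t\<^sup>2 * (\<integral>x. (f x)\<^sup>2 \<partial>M) - 2 * t * (\<integral>x. \<bar>f x * g x\<bar> \<partial>M) + (\<integral>x. (g x)\<^sup>2 \<partial>M)"
      using fi gi fgi by simp
    finally show "0 \<le> t\<^sup>2 * (\<integral>x. (f x)\<^sup>2 \<partial>M) - 2 * t * (\<integral>x. \<bar>f x * g x\<bar> \<partial>M) + (\<integral>x. (g x)\<^sup>2 \<partial>M)" .
  qed
qed

lemma L2_cs:
  fixes f g :: "'a \<Rightarrow> real"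
  assumes "sq_integrable M f" "sq_integrable M g"
  shows "integrable M (\<lambda>x. f x * g x)"
    and "\<bar>\<integral>x. f x * g x \<partial>M\<bar> \<le> L2norm M f * L2norm M g"
proof -
  have [measurable]: "f \<in> borel_measurable M" "g \<in> borel_measurable M"
    using assms by (auto simp: sq_integrable_def)
  note cs = integral_cs[of f M g]
  have i: "integrable M (\<lambda>x. \<bar>f x * g x\<bar>)" using cs(1) assms by (auto simp: sq_integrable_def)
  show "integrable M (\<lambda>x. f x * g x)"
    using i by (simp add: integrable_abs_iff)
  have "\<bar>\<integral>x. f x * g x \<partial>M\<bar> \<le> (\<integral>x. \<bar>f x * g x\<bar> \<partial>M)"
    using integral_norm_bound[of M "\<lambda>x. f x * g x"] by simp
  also have "\<dots> \<le> L2norm M f * L2norm M g"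
    using cs(2) assms by (auto simp: sq_integrable_def L2norm_def)
  finally show "\<bar>\<integral>x. f x * g x \<partial>M\<bar> \<le> L2norm M f * L2norm M g" .
qed

lemma (in pair_sigma_finite) integrable_prod_mult:
  fixes f g :: "_ \<Rightarrow> real"
  assumes f: "integrable M1 f" and g: "integrable M2 g"
  shows "integrable (M1 \<Otimes>\<^sub>M M2) (\<lambda>(x, y). f x * g y)"
proof (subst integrable_iff_bounded, intro conjI)
  have [measurable]: "f \<in> borel_measurable M1" "g \<in> borel_measurable M2" using f g by auto
  show "(\<lambda>(x, y). f x * g y) \<in> borel_measurable (M1 \<Otimes>\<^sub>M M2)" by measurable
  have "(\<integral>\<^sup>+ p. ennreal (norm (case p of (x, y) \<Rightarrow> f x * g y)) \<partial>(M1 \<Otimes>\<^sub>M M2))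
      = (\<integral>\<^sup>+ x. \<integral>\<^sup>+ y. ennreal (norm (f x * g y)) \<partial>M2 \<partial>M1)"
    by (subst M2.nn_integral_fst[symmetric]) (auto simp: case_prod_beta)
  also have "\<dots> = (\<integral>\<^sup>+ x. ennreal (norm (f x)) * (\<integral>\<^sup>+ y. ennreal (norm (g y)) \<partial>M2) \<partial>M1)"
    by (auto simp: abs_mult ennreal_mult nn_integral_cmult intro!: nn_integral_cong)
  also have "\<dots> = (\<integral>\<^sup>+ x. ennreal (norm (f x)) \<partial>M1) * (\<integral>\<^sup>+ y. ennreal (norm (g y)) \<partial>M2)"
    by (simp add: nn_integral_multc)
  also have "\<dots> < \<infinity>"
    using f g by (simp add: integrable_iff_bounded ennreal_mult_less_top)
  finally show "(\<integral>\<^sup>+ p. ennreal (norm (case p of (x, y) \<Rightarrow> f x * g y)) \<partial>(M1 \<Otimes>\<^sub>M M2)) < \<infinity>" .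
qed

locale kop = prob_space M for M :: "'a measure" +
  fixes k :: "'a \<Rightarrow> 'a \<Rightarrow> real" and B :: real
  assumes k_meas[measurable]: "(\<lambda>(x, y). k x y) \<in> borel_measurable (M \<Otimes>\<^sub>M M)"
    and k_nn: "\<And>x y. x \<in> space M \<Longrightarrow> y \<in> space M \<Longrightarrow> 0 \<le> k x y"
    and k_le: "\<And>x y. x \<in> space M \<Longrightarrow> y \<in> space M \<Longrightarrow> k x y \<le> B"
    and k_sym: "\<And>x y. x \<in> space M \<Longrightarrow> y \<in> space M \<Longrightarrow> k x y = k y x"
begin

definition K :: "('a \<Rightarrow> real) \<Rightarrow> 'a \<Rightarrow> real" where
  "K w = (\<lambda>x. \<integral>y. k x y * w y \<partial>M)"

lemma B_nn: "0 \<le> B"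
proof -
  obtain x where "x \<in> space M" using not_empty by blast
  thus ?thesis using k_nn k_le by (meson order_trans)
qed

lemma k_sect_meas[measurable]: "x \<in> space M \<Longrightarrow> k x \<in> borel_measurable M"
  using measurable_Pair2[OF k_meas] by simp

lemma K_meas[measurable]:
  assumes [measurable]: "w \<in> borel_measurable M" shows "K w \<in> borel_measurable M"
  unfolding K_def by measurable


definition bm :: "('a \<Rightarrow> real) \<Rightarrow> bool" where
  "bm w \<longleftrightarrow> w \<in> borel_measurable M \<and> (\<exists>C. \<forall>x\<in>space M. \<bar>w x\<bar> \<le> C)"

lemma bm_integrable: assumes "bm w" shows "integrable M w"
proof -
  from assms obtain C where w[measurable]: "w \<in> borel_measurable M" and C: "\<forall>x\<in>space M. \<bar>w x\<bar> \<le> C"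
    unfolding bm_def by blast
  show ?thesis by (rule integrable_const_bound[where B=C]) (use C in auto)
qed

lemma bm_sq: assumes "bm w" shows "sq_integrable M w"
proof -
  from assms obtain C where w[measurable]: "w \<in> borel_measurable M" and C: "\<forall>x\<in>space M. \<bar>w x\<bar> \<le> C"
    unfolding bm_def by blast
  have "integrable M (\<lambda>x. (w x)\<^sup>2)"
  proof (rule integrable_const_bound[where B="C\<^sup>2"])
    show "AE x in M. norm ((w x)\<^sup>2) \<le> C\<^sup>2"
    proof (rule AE_I2)
      fix x assume "x \<in> space M"
      hence "\<bar>w x\<bar>\<^sup>2 \<le> C\<^sup>2" using C by (intro power_mono) auto
      thus "norm ((w x)\<^sup>2) \<le> C\<^sup>2" by simp
    qed
  qed simp
  thus ?thesis unfolding sq_integrable_def by simp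
qed

lemma sq_int_integrable: "sq_integrable M w \<Longrightarrow> integrable M w"
  unfolding sq_integrable_def by (auto intro: square_integrable_imp_integrable)

lemma bm_meas: "bm w \<Longrightarrow> w \<in> borel_measurable M" unfolding bm_def by simp

lemma bm_mult: assumes "bm f" "bm g" shows "bm (\<lambda>x. f x * g x)"
proof -
  from assms obtain C D where "\<forall>x\<in>space M. \<bar>f x\<bar> \<le> C" "\<forall>x\<in>space M. \<bar>g x\<bar> \<le> D"
    and [measurable]: "f \<in> borel_measurable M" "g \<in> borel_measurable M" unfolding bm_def by blast
  hence "\<forall>x\<in>space M. \<bar>f x * g x\<bar> \<le> C * D"
    by (auto simp: abs_mult intro!: mult_mono)
  thus ?thesis unfolding bm_def by auto
qed

lemma bm_add: assumes "bm f" "bm g" shows "bm (\<lambda>x. f x + g x)"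
proof -
  from assms obtain C D where "\<forall>x\<in>space M. \<bar>f x\<bar> \<le> C" "\<forall>x\<in>space M. \<bar>g x\<bar> \<le> D"
    and [measurable]: "f \<in> borel_measurable M" "g \<in> borel_measurable M" unfolding bm_def by blast
  hence "\<forall>x\<in>space M. \<bar>f x + g x\<bar> \<le> C + D" by (auto intro: abs_triangle_ineq[THEN order_trans] add_mono)
  thus ?thesis unfolding bm_def by auto
qed

lemma bm_cmult: assumes "bm f" shows "bm (\<lambda>x. c * f x)"
proof -
  have "bm (\<lambda>_. c)" unfolding bm_def by auto
  from bm_mult[OF this assms] show ?thesis .
qed

lemma bm_diff: assumes "bm f" "bm g" shows "bm (\<lambda>x. f x - g x)"
  using bm_add[OF assms(1) bm_cmult[OF assms(2), of "-1"]] by simp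

lemma K_int: assumes "integrable M w" "x \<in> space M" shows "integrable M (\<lambda>y. k x y * w y)"
proof (rule Bochner_Integration.integrable_bound[of _ "\<lambda>y. B * w y"])
  show "integrable M (\<lambda>y. B * w y)" using assms by simp
  have [measurable]: "w \<in> borel_measurable M" using assms by simp
  show "(\<lambda>y. k x y * w y) \<in> borel_measurable M" using assms(2) by measurable
  show "AE y in M. norm (k x y * w y) \<le> norm (B * w y)"
    using assms(2) k_nn k_le B_nn by (auto simp: abs_mult intro!: mult_right_mono)
qed

lemma K_abs_le: assumes "integrable M w" "x \<in> space M"
  shows "\<bar>K w x\<bar> \<le> B * (\<integral>y. \<bar>w y\<bar> \<partial>M)"
proof -
  have "\<bar>K w x\<bar> \<le> (\<integral>y. \<bar>k x y * w y\<bar> \<partial>M)"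
    unfolding K_def using integral_norm_bound[of M "\<lambda>y. k x y * w y"] by simp
  also have "\<dots> \<le> (\<integral>y. B * \<bar>w y\<bar> \<partial>M)"
  proof (rule integral_mono)
    show "integrable M (\<lambda>y. \<bar>k x y * w y\<bar>)" using K_int[OF assms] by simp
    show "integrable M (\<lambda>y. B * \<bar>w y\<bar>)" using assms by simp
    fix y assume "y \<in> space M"
    thus "\<bar>k x y * w y\<bar> \<le> B * \<bar>w y\<bar>" using assms k_nn k_le
      by (auto simp: abs_mult intro!: mult_right_mono)
  qed
  finally show ?thesis by simp
qed

lemma K_nonneg: assumes "\<And>y. y \<in> space M \<Longrightarrow> 0 \<le> w y" "x \<in> space M" shows "0 \<le> K w x"
  unfolding K_def using assms k_nn by (intro Bochner_Integration.integral_nonneg) auto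

lemma K_le_int: assumes "integrable M w" "\<And>y. y \<in> space M \<Longrightarrow> 0 \<le> w y" "x \<in> space M"
  shows "K w x \<le> B * (\<integral>y. w y \<partial>M)"
proof -
  have "K w x \<le> (\<integral>y. B * w y \<partial>M)"
    unfolding K_def using assms K_int[OF assms(1,3)] k_le
    by (intro integral_mono) (auto intro!: mult_right_mono)
  thus ?thesis by simp
qed

lemma K_mono: assumes "integrable M f" "integrable M g" "\<And>y. y \<in> space M \<Longrightarrow> f y \<le> g y" "x \<in> space M"
  shows "K f x \<le> K g x"
  unfolding K_def using assms K_int[OF assms(1,4)] K_int[OF assms(2,4)] k_nn
  by (intro integral_mono) (auto intro!: mult_left_mono)

lemma K_abs: assumes "integrable M w" "x \<in> space M" shows "\<bar>K w x\<bar> \<le> K (\<lambda>y. \<bar>w y\<bar>) x"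
proof -
  have "\<bar>K w x\<bar> \<le> (\<integral>y. \<bar>k x y * w y\<bar> \<partial>M)"
    unfolding K_def using integral_norm_bound[of M "\<lambda>y. k x y * w y"] by simp
  also have "\<dots> = K (\<lambda>y. \<bar>w y\<bar>) x"
    unfolding K_def using k_nn assms(2) by (intro Bochner_Integration.integral_cong) (auto simp: abs_mult)
  finally show ?thesis .
qed

lemma K_diff: assumes "integrable M f" "integrable M g" "x \<in> space M"
  shows "K (\<lambda>y. f y - g y) x = K f x - K g x"
  unfolding K_def using K_int[OF assms(1,3)] K_int[OF assms(2,3)]
  by (simp add: right_diff_distrib)

lemma K_add: assumes "integrable M f" "integrable M g" "x \<in> space M"
  shows "K (\<lambda>y. f y + g y) x = K f x + K g x"
  unfolding K_def using K_int[OF assms(1,3)] K_int[OF assms(2,3)]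
  by (simp add: distrib_left)

lemma K_cmult: "K (\<lambda>y. c * f y) = (\<lambda>x. c * K f x)"
proof
  fix x
  have "K (\<lambda>y. c * f y) x = (\<integral>y. c * (k x y * f y) \<partial>M)"
    unfolding K_def by (simp add: algebra_simps)
  thus "K (\<lambda>y. c * f y) x = c * K f x" unfolding K_def by simp
qed

lemma K_bm: assumes "integrable M w" shows "bm (K w)"
  unfolding bm_def using K_abs_le[OF assms] assms by auto


lemma K_adj: assumes fi: "integrable M f" and gi: "integrable M g"
  shows "(\<integral>x. K f x * g x \<partial>M) = (\<integral>x. f x * K g x \<partial>M)"
proof -
  interpret P: pair_sigma_finite M M
    by (simp add: pair_sigma_finite_def sigma_finite_measure_axioms)
  have [measurable]: "f \<in> borel_measurable M" "g \<in> borel_measurable M" using fi gi by auto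
  define h where "h x y = k x y * f y * g x" for x y
  have hm[measurable]: "(\<lambda>(x, y). h x y) \<in> borel_measurable (M \<Otimes>\<^sub>M M)"
    unfolding h_def by measurable
  have gf: "integrable (M \<Otimes>\<^sub>M M) (\<lambda>p. B * (case p of (x, y) \<Rightarrow> g x * f y))"
    using P.integrable_prod_mult[OF gi fi] by simp
  have hi: "integrable (M \<Otimes>\<^sub>M M) (\<lambda>(x, y). h x y)"
  proof (rule Bochner_Integration.integrable_bound[OF gf hm])
    show "AE p in M \<Otimes>\<^sub>M M. norm (case p of (x, y) \<Rightarrow> h x y) \<le> norm (B * (case p of (x, y) \<Rightarrow> g x * f y))"
    proof (rule AE_I2)
      fix p assume "p \<in> space (M \<Otimes>\<^sub>M M)"
      then obtain x y where p: "p = (x, y)" "x \<in> space M" "y \<in> space M"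
        by (auto simp: space_pair_measure)
      have "\<bar>k x y * f y * g x\<bar> = k x y * \<bar>g x * f y\<bar>"
        using k_nn[OF p(2,3)] by (simp add: abs_mult)
      also have "\<dots> \<le> B * \<bar>g x * f y\<bar>"
        using k_le[OF p(2,3)] by (rule mult_right_mono) simp
      finally have "\<bar>k x y * f y * g x\<bar> \<le> B * \<bar>g x * f y\<bar>" .
      thus "norm (case p of (x, y) \<Rightarrow> h x y) \<le> norm (B * (case p of (x, y) \<Rightarrow> g x * f y))"
        using p B_nn by (simp add: h_def abs_mult)
    qed
  qed
  have "(\<integral>x. K f x * g x \<partial>M) = (\<integral>x. \<integral>y. h x y \<partial>M \<partial>M)"
    unfolding K_def h_def by simp
  also have "\<dots> = (\<integral>y. \<integral>x. h x y \<partial>M \<partial>M)"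
    using P.Fubini_integral[OF hi] by simp
  also have "\<dots> = (\<integral>y. f y * K g y \<partial>M)"
  proof (rule Bochner_Integration.integral_cong[OF refl])
    fix y assume y: "y \<in> space M"
    have "(\<integral>x. h x y \<partial>M) = (\<integral>x. f y * (k y x * g x) \<partial>M)"
      using y k_sym by (intro Bochner_Integration.integral_cong) (auto simp: h_def)
    thus "(\<integral>x. h x y \<partial>M) = f y * K g y" unfolding K_def by simp
  qed
  finally show ?thesis .
qed

lemma L2norm_nonneg: "0 \<le> L2norm M f" unfolding L2norm_def by simp

lemma L2norm_bound: assumes [measurable]: "f \<in> borel_measurable M" and C: "\<And>x. x \<in> space M \<Longrightarrow> \<bar>f x\<bar> \<le> C"
  shows "L2norm M f \<le> C"
proof -
  obtain x0 where "x0 \<in> space M" using not_empty by blast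
  hence C0: "0 \<le> C" using C[of x0] by linarith
  have sq: "\<And>x. x \<in> space M \<Longrightarrow> (f x)\<^sup>2 \<le> C\<^sup>2"
  proof -
    fix x assume "x \<in> space M"
    hence "\<bar>f x\<bar>\<^sup>2 \<le> C\<^sup>2" using C by (intro power_mono) auto
    thus "(f x)\<^sup>2 \<le> C\<^sup>2" by simp
  qed
  have fi: "integrable M (\<lambda>x. (f x)\<^sup>2)"
  proof (rule integrable_const_bound[where B="C\<^sup>2"])
    show "AE x in M. norm ((f x)\<^sup>2) \<le> C\<^sup>2"
      using sq by (intro AE_I2) simp
  qed simp
  have "(\<integral>x. (f x)\<^sup>2 \<partial>M) \<le> (\<integral>x. C\<^sup>2 \<partial>M)"
    using fi sq by (intro integral_mono) auto
  also have "\<dots> = C\<^sup>2" by (simp add: prob_space)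
  finally have "(\<integral>x. (f x)\<^sup>2 \<partial>M) \<le> C\<^sup>2" .
  hence "sqrt (\<integral>x. (f x)\<^sup>2 \<partial>M) \<le> sqrt (C\<^sup>2)" by (rule real_sqrt_le_mono)
  thus ?thesis unfolding L2norm_def using C0 by simp
qed

lemma L2norm_cmult: "L2norm M (\<lambda>x. c * f x) = \<bar>c\<bar> * L2norm M f"
  unfolding L2norm_def by (simp add: power_mult_distrib real_sqrt_mult)

lemma sq_int_cmult: assumes "sq_integrable M f" shows "sq_integrable M (\<lambda>x. c * f x)"
proof -
  have [measurable]: "f \<in> borel_measurable M" using assms by (simp add: sq_integrable_def)
  show ?thesis using assms unfolding sq_integrable_def by (simp add: power_mult_distrib)
qed

lemma sq_int_abs: assumes "sq_integrable M f" shows "sq_integrable M (\<lambda>x. \<bar>f x\<bar>)"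
proof -
  have [measurable]: "f \<in> borel_measurable M" using assms by (simp add: sq_integrable_def)
  show ?thesis using assms unfolding sq_integrable_def by simp
qed

lemma L2norm_abs: "L2norm M (\<lambda>x. \<bar>f x\<bar>) = L2norm M f"
  unfolding L2norm_def by simp

lemma L1_le_L2: assumes "sq_integrable M w" shows "(\<integral>x. \<bar>w x\<bar> \<partial>M) \<le> L2norm M w"
proof -
  have one: "sq_integrable M (\<lambda>_. 1)" unfolding sq_integrable_def by simp
  have "\<bar>\<integral>x. \<bar>w x\<bar> * 1 \<partial>M\<bar> \<le> L2norm M (\<lambda>x. \<bar>w x\<bar>) * L2norm M (\<lambda>_. 1)"
    by (rule L2_cs(2)[OF sq_int_abs[OF assms] one])
  moreover have "L2norm M (\<lambda>_. 1) = 1" unfolding L2norm_def by (simp add: prob_space)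
  ultimately show ?thesis by (simp add: L2norm_abs)
qed

definition lam where "lam = opnorm2 M K"

definition KS where "KS = {L2norm M (K w) | w. sq_integrable M w \<and> L2norm M w \<le> 1}"

lemma lam_KS: "lam = Sup KS" unfolding lam_def KS_def opnorm2_def ..

lemma K_L2_le_B: assumes "sq_integrable M w" shows "L2norm M (K w) \<le> B * L2norm M w"
proof -
  have wi: "integrable M w" using sq_int_integrable[OF assms] .
  have "L2norm M (K w) \<le> B * (\<integral>y. \<bar>w y\<bar> \<partial>M)"
    by (rule L2norm_bound) (use wi K_abs_le[OF wi] in auto)
  also have "\<dots> \<le> B * L2norm M w" using L1_le_L2[OF assms] B_nn by (rule mult_left_mono)
  finally show ?thesis .
qed

lemma KS_bdd: "bdd_above KS"
  unfolding KS_def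
proof (rule bdd_aboveI[where M=B], clarsimp)
  fix w assume "sq_integrable M w" "L2norm M w \<le> 1"
  moreover have "B * L2norm M w \<le> B * 1" using B_nn \<open>L2norm M w \<le> 1\<close> by (intro mult_left_mono)
  ultimately show "L2norm M (K w) \<le> B" using K_L2_le_B[of w] by simp
qed

lemma K_zero: "K (\<lambda>_. 0) = (\<lambda>_. 0)" unfolding K_def by simp

lemma KS_ne: "0 \<in> KS"
proof -
  have "sq_integrable M (\<lambda>_. 0)" unfolding sq_integrable_def by simp
  moreover have "L2norm M (\<lambda>_. 0::real) = 0" unfolding L2norm_def by simp
  ultimately show ?thesis unfolding KS_def by (force simp: K_zero)
qed

lemma lam_nonneg: "0 \<le> lam"
  unfolding lam_KS using KS_ne KS_bdd by (rule cSup_upper)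

lemma K_norm_le: assumes w: "sq_integrable M w" shows "L2norm M (K w) \<le> lam * L2norm M w"
proof (cases "L2norm M w = 0")
  case True
  have [measurable]: "w \<in> borel_measurable M" using w by (simp add: sq_integrable_def)
  have "(\<integral>x. (w x)\<^sup>2 \<partial>M) = 0" using True unfolding L2norm_def by simp
  hence "AE x in M. (w x)\<^sup>2 = 0"
    using w by (subst integral_nonneg_eq_0_iff_AE[symmetric]) (auto simp: sq_integrable_def)
  hence ae: "AE x in M. w x = 0" by simp
  have "L2norm M (K w) \<le> 0"
  proof (rule L2norm_bound)
    show "K w \<in> borel_measurable M" by measurable
    fix x assume x: "x \<in> space M"
    have "K w x = (\<integral>y. 0 \<partial>M)" unfolding K_def
      using x ae by (intro integral_cong_AE) auto
    thus "\<bar>K w x\<bar> \<le> 0" by simp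
  qed
  thus ?thesis using True by simp
next
  case False
  define r where "r = L2norm M w"
  have rp: "r > 0" using False L2norm_nonneg[of w] unfolding r_def by simp
  define v where "v = (\<lambda>x. (1 / r) * w x)"
  have "sq_integrable M v" unfolding v_def by (rule sq_int_cmult[OF w])
  moreover have "L2norm M v = 1" unfolding v_def L2norm_cmult using rp by (simp add: r_def)
  ultimately have "L2norm M (K v) \<in> KS" unfolding KS_def by auto
  hence "L2norm M (K v) \<le> lam" unfolding lam_KS using KS_bdd by (rule cSup_upper)
  moreover have "L2norm M (K v) = L2norm M (K w) / r"
    unfolding v_def K_cmult L2norm_cmult using rp by simp
  ultimately show ?thesis using rp by (simp add: r_def field_simps)
qed

lemma lam_approx: assumes "e > 0"
  shows "\<exists>w. sq_integrable M w \<and> L2norm M w \<le> 1 \<and> lam - e < L2norm M (K w)"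
proof -
  have "lam - e < Sup KS" using assms lam_KS by simp
  then obtain t where "t \<in> KS" "lam - e < t"
    using less_cSup_iff[of KS "lam - e"] KS_ne KS_bdd by blast
  thus ?thesis unfolding KS_def by auto
qed


definition Kp :: "nat \<Rightarrow> ('a \<Rightarrow> real) \<Rightarrow> 'a \<Rightarrow> real" where
  "Kp n = K ^^ n"

lemma Kp_0[simp]: "Kp 0 w = w" unfolding Kp_def by simp
lemma Kp_Suc: "Kp (Suc n) w = K (Kp n w)" unfolding Kp_def by simp
lemma Kp_Suc': "Kp (Suc n) w = Kp n (K w)" unfolding Kp_def by (simp add: funpow_swap1)
lemma Kp_add: "Kp (a + b) w = Kp a (Kp b w)" unfolding Kp_def by (simp add: funpow_add)

lemma Kp_int: "integrable M w \<Longrightarrow> integrable M (Kp n w)"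
  by (induction n) (auto simp: Kp_Suc intro: bm_integrable K_bm)

lemma Kp_bm: "integrable M w \<Longrightarrow> bm (Kp (Suc n) w)"
  by (simp add: Kp_Suc K_bm Kp_int)

lemma Kp_meas: "integrable M w \<Longrightarrow> Kp n w \<in> borel_measurable M"
  using Kp_int by auto

lemma Kp_sq: "sq_integrable M w \<Longrightarrow> sq_integrable M (Kp n w)"
  by (cases n) (auto intro: bm_sq Kp_bm sq_int_integrable)

lemma Kp_adj: assumes "integrable M f" "integrable M g"
  shows "(\<integral>x. Kp n f x * g x \<partial>M) = (\<integral>x. f x * Kp n g x \<partial>M)"
  using assms
proof (induction n arbitrary: g)
  case 0 thus ?case by simp
next
  case (Suc n)
  have "(\<integral>x. Kp (Suc n) f x * g x \<partial>M) = (\<integral>x. Kp n f x * K g x \<partial>M)"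
    unfolding Kp_Suc using K_adj[OF Kp_int[OF Suc.prems(1)] Suc.prems(2)] .
  also have "\<dots> = (\<integral>x. f x * Kp n (K g) x \<partial>M)"
    using Suc.IH[OF Suc.prems(1) bm_integrable[OF K_bm[OF Suc.prems(2)]]] .
  finally show ?case by (simp add: Kp_Suc')
qed

lemma Kp_cmult: "Kp n (\<lambda>y. c * f y) = (\<lambda>x. c * Kp n f x)"
  by (induction n) (auto simp: Kp_Suc K_cmult)

lemma Kp_nonneg: "(\<And>y. y \<in> space M \<Longrightarrow> 0 \<le> w y) \<Longrightarrow> x \<in> space M \<Longrightarrow> 0 \<le> Kp n w x"
proof (induction n arbitrary: x)
  case 0 thus ?case by simp
next
  case (Suc n) thus ?case unfolding Kp_Suc by (intro K_nonneg) auto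
qed

lemma Kp_abs: assumes "integrable M w" "x \<in> space M"
  shows "\<bar>Kp n w x\<bar> \<le> Kp n (\<lambda>y. \<bar>w y\<bar>) x"
  using assms(2)
proof (induction n arbitrary: x)
  case 0 thus ?case by simp
next
  case (Suc n)
  have "\<bar>Kp (Suc n) w x\<bar> \<le> K (\<lambda>y. \<bar>Kp n w y\<bar>) x"
    unfolding Kp_Suc using K_abs[OF Kp_int[OF assms(1)] Suc.prems] .
  also have "\<dots> \<le> K (Kp n (\<lambda>y. \<bar>w y\<bar>)) x"
  proof (rule K_mono)
    show "integrable M (\<lambda>y. \<bar>Kp n w y\<bar>)" using Kp_int[OF assms(1)] by simp
    show "integrable M (Kp n (\<lambda>y. \<bar>w y\<bar>))" using assms(1) by (intro Kp_int) simp
  qed (use Suc.prems Suc.IH in auto)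
  finally show ?case by (simp add: Kp_Suc)
qed

lemma L2norm_sq: "(L2norm M f)\<^sup>2 = (\<integral>x. (f x)\<^sup>2 \<partial>M)"
  unfolding L2norm_def by simp

lemma sqstep: assumes w: "sq_integrable M w" "L2norm M w \<le> 1"
  shows "(L2norm M (Kp N w))\<^sup>2 \<le> L2norm M (Kp (2 * N) w)"
proof -
  have wi: "integrable M w" using sq_int_integrable[OF w(1)] .
  have "(L2norm M (Kp N w))\<^sup>2 = (\<integral>x. Kp N w x * Kp N w x \<partial>M)"
    unfolding L2norm_sq by (simp add: power2_eq_square)
  also have "\<dots> = (\<integral>x. w x * Kp N (Kp N w) x \<partial>M)"
    using wi by (intro Kp_adj Kp_int)
  also have "\<dots> = (\<integral>x. w x * Kp (2 * N) w x \<partial>M)"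
    by (simp add: Kp_add[symmetric] mult_2)
  also have "\<dots> \<le> L2norm M w * L2norm M (Kp (2 * N) w)"
    using L2_cs(2)[OF w(1) Kp_sq[OF w(1), of "2 * N"]] by (meson abs_ge_self order_trans)
  also have "\<dots> \<le> 1 * L2norm M (Kp (2 * N) w)"
    using w(2) by (intro mult_right_mono L2norm_nonneg)
  finally show ?thesis by simp
qed

lemma powstep: assumes w: "sq_integrable M w" "L2norm M w \<le> 1"
  shows "(L2norm M (K w)) ^ (2 ^ j) \<le> L2norm M (Kp (2 ^ j) w)"
proof (induction j)
  case 0 thus ?case by (simp add: Kp_Suc)
next
  case (Suc j)
  have "(L2norm M (K w)) ^ (2 ^ Suc j) = ((L2norm M (K w)) ^ (2 ^ j))\<^sup>2"
    by (simp add: power_mult[symmetric] mult.commute)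
  also have "\<dots> \<le> (L2norm M (Kp (2 ^ j) w))\<^sup>2"
    using Suc.IH by (intro power_mono) (simp_all add: L2norm_nonneg)
  also have "\<dots> \<le> L2norm M (Kp (2 * 2 ^ j) w)" by (rule sqstep[OF w])
  finally show ?case by simp
qed

definition one :: "'a \<Rightarrow> real" where "one = (\<lambda>_. 1)"

lemma one_int: "integrable M one" unfolding one_def by simp
lemma one_sq: "sq_integrable M one" unfolding one_def sq_integrable_def by simp

lemma upper_step: assumes w: "sq_integrable M w"
  shows "L2norm M (Kp (Suc n) w) \<le> B * L2norm M w * L2norm M (Kp n one)"
proof (rule L2norm_bound)
  have wi: "integrable M w" using sq_int_integrable[OF w] .
  show "Kp (Suc n) w \<in> borel_measurable M" using wi by (rule Kp_meas)
  fix x assume x: "x \<in> space M"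
  have awi: "integrable M (\<lambda>y. \<bar>w y\<bar>)" using wi by simp
  have "\<bar>Kp (Suc n) w x\<bar> \<le> Kp (Suc n) (\<lambda>y. \<bar>w y\<bar>) x" by (rule Kp_abs[OF wi x])
  also have "\<dots> = K (Kp n (\<lambda>y. \<bar>w y\<bar>)) x" by (simp add: Kp_Suc)
  also have "\<dots> \<le> B * (\<integral>y. Kp n (\<lambda>y. \<bar>w y\<bar>) y \<partial>M)"
    using awi x by (intro K_le_int Kp_int Kp_nonneg) auto
  also have "(\<integral>y. Kp n (\<lambda>y. \<bar>w y\<bar>) y \<partial>M) = (\<integral>y. Kp n (\<lambda>y. \<bar>w y\<bar>) y * one y \<partial>M)"
    by (simp add: one_def)
  also have "\<dots> = (\<integral>y. \<bar>w y\<bar> * Kp n one y \<partial>M)"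
    using awi one_int by (rule Kp_adj)
  also have "\<dots> \<le> L2norm M (\<lambda>y. \<bar>w y\<bar>) * L2norm M (Kp n one)"
    using L2_cs(2)[OF sq_int_abs[OF w] Kp_sq[OF one_sq, of n]] by (meson abs_ge_self order_trans)
  finally show "\<bar>Kp (Suc n) w x\<bar> \<le> B * L2norm M w * L2norm M (Kp n one)"
    using B_nn by (simp add: L2norm_abs mult_left_mono mult.assoc)
qed


definition e :: "nat \<Rightarrow> real" where "e p = (\<integral>x. Kp p one x \<partial>M)"
definition c :: "nat \<Rightarrow> real" where "c n = e (2 * n) / lam ^ (2 * n)"

lemma ip_pow: "(\<integral>x. Kp a one x * Kp b one x \<partial>M) = e (a + b)"
proof -
  have "(\<integral>x. Kp a one x * Kp b one x \<partial>M) = (\<integral>x. one x * Kp a (Kp b one) x \<partial>M)"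
    by (rule Kp_adj[OF one_int Kp_int[OF one_int]])
  thus ?thesis by (simp add: Kp_add e_def one_def)
qed

lemma norm_pow_sq: "(L2norm M (Kp n one))\<^sup>2 = e (2 * n)"
  unfolding L2norm_sq using ip_pow[of n n] by (simp add: power2_eq_square mult_2)

context
  assumes lp: "lam > 0"
begin

lemma lower_pow: "lam ^ (2 ^ j) \<le> B * L2norm M (Kp (2 ^ j - 1) one)"
proof -
  define N :: nat where "N = 2 ^ j"
  have N0: "N > 0" unfolding N_def by simp
  define C where "C = B * L2norm M (Kp (N - 1) one)"
  have C0: "0 \<le> C" unfolding C_def using B_nn L2norm_nonneg by simp
  have bound: "L2norm M (K w) ^ N \<le> C" if w: "sq_integrable M w" "L2norm M w \<le> 1" for w
  proof -
    have "L2norm M (K w) ^ N \<le> L2norm M (Kp N w)" unfolding N_def by (rule powstep[OF w])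
    also have "\<dots> = L2norm M (Kp (Suc (N - 1)) w)" using N0 by simp
    also have "\<dots> \<le> B * L2norm M w * L2norm M (Kp (N - 1) one)" by (rule upper_step[OF w(1)])
    also have "\<dots> \<le> B * 1 * L2norm M (Kp (N - 1) one)"
      using w(2) B_nn L2norm_nonneg by (intro mult_right_mono mult_left_mono) auto
    finally show ?thesis unfolding C_def by simp
  qed
  show ?thesis
  proof (rule ccontr)
    assume "\<not> ?thesis"
    hence Clt: "C < lam ^ N" unfolding C_def N_def by simp
    define t where "t = root N C"
    have tN: "t ^ N = C" unfolding t_def using N0 C0 by (simp add: real_root_pow_pos2)
    have t0: "0 \<le> t" unfolding t_def using C0 by (rule real_root_ge_zero)
    have "t < root N (lam ^ N)" unfolding t_def using N0 Clt by (rule real_root_less_mono)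
    also have "root N (lam ^ N) = lam" using N0 lp by (simp add: real_root_power_cancel)
    finally have tl: "t < lam" .
    obtain w where w: "sq_integrable M w" "L2norm M w \<le> 1" "lam - (lam - t) < L2norm M (K w)"
      using lam_approx[of "lam - t"] tl by auto
    have "C < L2norm M (K w) ^ N"
      unfolding tN[symmetric] using w(3) t0 N0 by (intro power_strict_mono) auto
    with bound[OF w(1,2)] show False by simp
  qed
qed

lemma B_pos: "B > 0"
proof -
  have "lam ^ (2 ^ 0) \<le> B * L2norm M (Kp (2 ^ 0 - 1) one)" by (rule lower_pow)
  thus ?thesis using lp B_nn by (cases "B = 0") auto
qed

lemma c_dec: "c (Suc n) \<le> c n"
proof -
  have "e (2 * Suc n) = (L2norm M (K (Kp n one)))\<^sup>2"
    using norm_pow_sq[of "Suc n"] by (simp add: Kp_Suc)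
  also have "\<dots> \<le> (lam * L2norm M (Kp n one))\<^sup>2"
    using K_norm_le[OF Kp_sq[OF one_sq]] by (intro power_mono) (simp_all add: L2norm_nonneg)
  also have "\<dots> = lam\<^sup>2 * e (2 * n)" by (simp add: power_mult_distrib norm_pow_sq)
  finally have "e (2 * Suc n) \<le> lam\<^sup>2 * e (2 * n)" .
  hence "e (2 * Suc n) / lam ^ (2 * Suc n) \<le> lam\<^sup>2 * e (2 * n) / lam ^ (2 * Suc n)"
    using lp by (intro divide_right_mono) auto
  also have "\<dots> = e (2 * n) / lam ^ (2 * n)" using lp by (simp add: power_add power2_eq_square field_simps)
  finally show ?thesis unfolding c_def .
qed

lemma c_decseq: "decseq c" using c_dec by (intro decseq_SucI) auto

definition \<delta> where "\<delta> = lam\<^sup>2 / B\<^sup>2"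

lemma delta_pos: "\<delta> > 0" unfolding \<delta>_def using lp B_pos by simp

lemma c_lower_pow: "\<delta> \<le> c (2 ^ j - 1)"
proof -
  define n :: nat where "n = 2 ^ j - 1"
  have n1: "Suc n = 2 ^ j" unfolding n_def by simp
  have "lam ^ (Suc n) \<le> B * L2norm M (Kp n one)" using lower_pow[of j] unfolding n_def n1 by simp
  hence "(lam ^ (Suc n))\<^sup>2 \<le> (B * L2norm M (Kp n one))\<^sup>2"
    using lp by (intro power_mono) auto
  moreover have "(lam ^ (Suc n))\<^sup>2 = lam ^ (2 * Suc n)"
    by (metis power_mult mult.commute)
  moreover have "(B * L2norm M (Kp n one))\<^sup>2 = B\<^sup>2 * e (2 * n)"
    by (simp add: power_mult_distrib norm_pow_sq)
  ultimately have "lam ^ (2 * Suc n) \<le> B\<^sup>2 * e (2 * n)" by simp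
  hence "lam ^ (2 * Suc n) / B\<^sup>2 \<le> e (2 * n)" using B_pos by (simp add: field_simps power2_eq_square)
  hence "lam ^ (2 * Suc n) / B\<^sup>2 / lam ^ (2 * n) \<le> e (2 * n) / lam ^ (2 * n)"
    using lp by (intro divide_right_mono) auto
  moreover have "lam ^ (2 * Suc n) / B\<^sup>2 / lam ^ (2 * n) = \<delta>"
    unfolding \<delta>_def using lp by (simp add: power_add power2_eq_square field_simps)
  ultimately show ?thesis unfolding c_def n_def by simp
qed

lemma c_lower: "\<delta> \<le> c n"
proof -
  have "n \<le> 2 ^ n - 1"
  proof -
    have "n < 2 ^ n" by (rule less_exp)
    thus ?thesis by arith
  qed
  hence "c (2 ^ n - 1) \<le> c n" using c_decseq by (simp add: decseq_def)
  thus ?thesis using c_lower_pow[of n] by simp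
qed

end


definition Q :: "nat \<Rightarrow> 'a \<Rightarrow> real" where "Q p = (\<lambda>x. (1 / lam ^ p) * Kp p one x)"
definition u :: "nat \<Rightarrow> 'a \<Rightarrow> real" where "u n = Q (Suc (2 * n))"

lemma Q_sq: "sq_integrable M (Q p)" unfolding Q_def by (intro sq_int_cmult Kp_sq one_sq)
lemma Q_int: "integrable M (Q p)" using Q_sq by (rule sq_int_integrable)
lemma Q_bm: "bm (Q (Suc p))" unfolding Q_def by (intro bm_cmult Kp_bm one_int)
lemma u_bm: "bm (u n)" unfolding u_def by (rule Q_bm)
lemma u_int: "integrable M (u n)" using u_bm by (rule bm_integrable)
lemma u_meas: "u n \<in> borel_measurable M" using u_bm by (rule bm_meas)

lemma Q_nonneg: assumes "x \<in> space M" "0 \<le> lam" shows "0 \<le> Q p x"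
proof -
  have "0 \<le> Kp p one x" using assms(1) by (intro Kp_nonneg) (auto simp: one_def)
  thus ?thesis unfolding Q_def using assms(2) by simp
qed

lemma Q_ip: "(\<integral>x. Q a x * Q b x \<partial>M) = e (a + b) / lam ^ (a + b)"
proof -
  have "(\<integral>x. Q a x * Q b x \<partial>M) = (\<integral>x. (1 / lam ^ (a + b)) * (Kp a one x * Kp b one x) \<partial>M)"
    unfolding Q_def by (simp add: power_add field_simps)
  also have "\<dots> = (1 / lam ^ (a + b)) * e (a + b)" by (simp add: ip_pow)
  finally show ?thesis by simp
qed

lemma K_cong: "(\<And>y. y \<in> space M \<Longrightarrow> f y = g y) \<Longrightarrow> K f x = K g x"
  unfolding K_def by (intro Bochner_Integration.integral_cong) auto

lemma K_sup: assumes "integrable M v" "\<And>y. y \<in> space M \<Longrightarrow> \<bar>v y\<bar> \<le> t" "x \<in> space M"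
  shows "\<bar>K v x\<bar> \<le> B * t"
proof -
  have "\<bar>K v x\<bar> \<le> B * (\<integral>y. \<bar>v y\<bar> \<partial>M)" by (rule K_abs_le[OF assms(1,3)])
  also have "(\<integral>y. \<bar>v y\<bar> \<partial>M) \<le> (\<integral>y. t \<partial>M)"
    using assms by (intro integral_mono) auto
  also have "(\<integral>y. t \<partial>M) = t" by (simp add: prob_space)
  finally show ?thesis using B_nn by (simp add: mult_left_mono)
qed

context
  assumes lp: "lam > 0"
begin

lemma KQ: "K (Q p) = (\<lambda>x. lam * Q (Suc p) x)"
  unfolding Q_def K_cmult using lp by (auto simp: Kp_Suc field_simps)

lemma Q_dist: "(L2norm M (\<lambda>x. Q (2 * n) x - Q (2 * m) x))\<^sup>2 = c (2 * n) + c (2 * m) - 2 * c (n + m)"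
proof -
  have i: "integrable M (\<lambda>x. Q a x * Q b x)" for a b using L2_cs(1)[OF Q_sq Q_sq] .
  have "(L2norm M (\<lambda>x. Q (2 * n) x - Q (2 * m) x))\<^sup>2
     = (\<integral>x. Q (2 * n) x * Q (2 * n) x + Q (2 * m) x * Q (2 * m) x - 2 * (Q (2 * n) x * Q (2 * m) x) \<partial>M)"
    unfolding L2norm_sq by (intro Bochner_Integration.integral_cong) (auto simp: power2_eq_square algebra_simps)
  also have "\<dots> = (\<integral>x. Q (2 * n) x * Q (2 * n) x \<partial>M) + (\<integral>x. Q (2 * m) x * Q (2 * m) x \<partial>M)
       - 2 * (\<integral>x. Q (2 * n) x * Q (2 * m) x \<partial>M)"
    using i by simp
  also have "\<dots> = c (2 * n) + c (2 * m) - 2 * c (n + m)"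
    unfolding Q_ip c_def by (simp add: algebra_simps)
  finally show ?thesis .
qed

lemma u_close: assumes x: "x \<in> space M"
  shows "\<bar>u n x - u m x\<bar> \<le> B / lam * sqrt (c (2 * n) + c (2 * m) - 2 * c (n + m))"
proof -
  have "u n x - u m x = (K (Q (2 * n)) x - K (Q (2 * m)) x) / lam"
    unfolding u_def KQ using lp by (simp add: field_simps)
  also have "K (Q (2 * n)) x - K (Q (2 * m)) x = K (\<lambda>y. Q (2 * n) y - Q (2 * m) y) x"
    using K_diff[OF Q_int Q_int x] by simp
  finally have eq: "\<bar>u n x - u m x\<bar> = \<bar>K (\<lambda>y. Q (2 * n) y - Q (2 * m) y) x\<bar> / lam"
    using lp by simp
  have di: "integrable M (\<lambda>y. Q (2 * n) y - Q (2 * m) y)" using Q_int by simp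
  have dsq: "sq_integrable M (\<lambda>y. Q (2 * n) y - Q (2 * m) y)"
    using Q_sq[of "2*n"] Q_sq[of "2*m"] L2_cs(1)[OF Q_sq Q_sq]
    unfolding sq_integrable_def by (simp add: power2_eq_square algebra_simps)
  have "\<bar>K (\<lambda>y. Q (2 * n) y - Q (2 * m) y) x\<bar> \<le> B * (\<integral>y. \<bar>Q (2 * n) y - Q (2 * m) y\<bar> \<partial>M)"
    by (rule K_abs_le[OF di x])
  also have "\<dots> \<le> B * L2norm M (\<lambda>y. Q (2 * n) y - Q (2 * m) y)"
    using L1_le_L2[OF dsq] B_nn by (rule mult_left_mono)
  also have "L2norm M (\<lambda>y. Q (2 * n) y - Q (2 * m) y) = sqrt (c (2 * n) + c (2 * m) - 2 * c (n + m))"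
    using Q_dist[of n m] L2norm_nonneg by (metis real_sqrt_abs real_sqrt_pow2_iff abs_of_nonneg)
  finally show ?thesis unfolding eq using lp by (simp add: divide_right_mono)
qed

end


definition U :: "'a \<Rightarrow> real" where "U x = lim (\<lambda>n. u n x)"

context
  assumes lp: "lam > 0"
begin

lemma u_cauchy: assumes "\<eta> > 0"
  shows "\<exists>N. \<forall>n\<ge>N. \<forall>m\<ge>N. \<forall>x\<in>space M. \<bar>u n x - u m x\<bar> \<le> \<eta>"
proof -
  obtain L where L: "c \<longlonglongrightarrow> L"
    using decseq_convergent[OF c_decseq[OF lp], of \<delta>] c_lower[OF lp] by blast
  define \<epsilon> where "\<epsilon> = (\<eta> * lam / B)\<^sup>2 / 4"
  have ep: "\<epsilon> > 0" unfolding \<epsilon>_def using assms lp B_pos[OF lp] by simp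
  obtain N where N: "\<And>p. p \<ge> N \<Longrightarrow> \<bar>c p - L\<bar> < \<epsilon>"
    using L ep unfolding LIMSEQ_iff by auto
  have "\<forall>n\<ge>N. \<forall>m\<ge>N. \<forall>x\<in>space M. \<bar>u n x - u m x\<bar> \<le> \<eta>"
  proof (intro allI impI ballI)
    fix n m x assume nm: "N \<le> n" "N \<le> m" and x: "x \<in> space M"
    have "\<bar>c (2 * n) - L\<bar> < \<epsilon>" "\<bar>c (2 * m) - L\<bar> < \<epsilon>" "\<bar>c (n + m) - L\<bar> < \<epsilon>"
      using nm by (auto intro!: N)
    hence D: "c (2 * n) + c (2 * m) - 2 * c (n + m) < 4 * \<epsilon>" by linarith
    have "sqrt (c (2 * n) + c (2 * m) - 2 * c (n + m)) \<le> sqrt (4 * \<epsilon>)"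
      using D by simp
    also have "sqrt (4 * \<epsilon>) = \<eta> * lam / B"
      unfolding \<epsilon>_def using assms lp B_pos[OF lp] by (simp add: real_sqrt_mult)
    finally have "B / lam * sqrt (c (2 * n) + c (2 * m) - 2 * c (n + m)) \<le> B / lam * (\<eta> * lam / B)"
      using lp B_pos[OF lp] by (intro mult_left_mono) auto
    also have "\<dots> = \<eta>" using lp B_pos[OF lp] by simp
    finally show "\<bar>u n x - u m x\<bar> \<le> \<eta>" using u_close[OF lp x, of n m] by linarith
  qed
  thus ?thesis by blast
qed

lemma U_lim: assumes x: "x \<in> space M" shows "(\<lambda>n. u n x) \<longlonglongrightarrow> U x"
proof -
  have "Cauchy (\<lambda>n. u n x)"
  proof (rule CauchyI)
    fix r :: real assume "0 < r"
    then obtain N where "\<forall>n\<ge>N. \<forall>m\<ge>N. \<forall>x\<in>space M. \<bar>u n x - u m x\<bar> \<le> r / 2"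
      using u_cauchy[of "r / 2"] by auto
    hence "\<forall>n\<ge>N. \<forall>m\<ge>N. norm (u n x - u m x) < r" using x \<open>0 < r\<close> by fastforce
    thus "\<exists>N. \<forall>n\<ge>N. \<forall>m\<ge>N. norm (u n x - u m x) < r" by blast
  qed
  hence "convergent (\<lambda>n. u n x)" by (simp add: Cauchy_convergent_iff)
  thus ?thesis unfolding U_def by (simp add: convergent_LIMSEQ_iff)
qed

lemma U_unif: assumes "\<eta> > 0"
  shows "\<exists>N. \<forall>n\<ge>N. \<forall>x\<in>space M. \<bar>u n x - U x\<bar> \<le> \<eta>"
proof -
  obtain N where N: "\<forall>n\<ge>N. \<forall>m\<ge>N. \<forall>x\<in>space M. \<bar>u n x - u m x\<bar> \<le> \<eta>"
    using u_cauchy[OF assms] by blast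
  have "\<forall>n\<ge>N. \<forall>x\<in>space M. \<bar>u n x - U x\<bar> \<le> \<eta>"
  proof (intro allI impI ballI)
    fix n x assume n: "N \<le> n" and x: "x \<in> space M"
    have "(\<lambda>m. \<bar>u n x - u m x\<bar>) \<longlonglongrightarrow> \<bar>u n x - U x\<bar>"
      by (intro tendsto_intros U_lim[OF x])
    moreover have "\<exists>N'. \<forall>m\<ge>N'. \<bar>u n x - u m x\<bar> \<le> \<eta>" using N n x by blast
    ultimately show "\<bar>u n x - U x\<bar> \<le> \<eta>" by (rule LIMSEQ_le_const2)
  qed
  thus ?thesis by blast
qed

lemma U_meas: "U \<in> borel_measurable M"
  by (rule borel_measurable_LIMSEQ_real[OF U_lim u_meas])

lemma U_bm: "bm U"
proof -
  obtain N where N: "\<forall>n\<ge>N. \<forall>x\<in>space M. \<bar>u n x - U x\<bar> \<le> 1" using U_unif[of 1] by auto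
  obtain C where C: "\<forall>x\<in>space M. \<bar>u N x\<bar> \<le> C" using u_bm[of N] unfolding bm_def by blast
  have "\<forall>x\<in>space M. \<bar>U x\<bar> \<le> C + 1"
  proof
    fix x assume x: "x \<in> space M"
    have "\<bar>u N x - U x\<bar> \<le> 1" using N x by auto
    thus "\<bar>U x\<bar> \<le> C + 1" using C x by fastforce
  qed
  thus ?thesis unfolding bm_def using U_meas by blast
qed

lemma U_int: "integrable M U" using U_bm by (rule bm_integrable)

lemma U_nonneg: assumes x: "x \<in> space M" shows "0 \<le> U x"
proof -
  have "\<forall>n. 0 \<le> u n x" unfolding u_def using x lp by (auto intro: Q_nonneg)
  thus ?thesis using U_lim[OF x] by (intro LIMSEQ_le_const) auto
qed

lemma KKu: "K (K (u n)) = (\<lambda>x. lam\<^sup>2 * u (Suc n) x)"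
proof -
  have "K (K (u n)) = K (\<lambda>x. lam * Q (Suc (Suc (2 * n))) x)"
    unfolding u_def KQ[OF lp] ..
  also have "\<dots> = (\<lambda>x. lam * K (Q (Suc (Suc (2 * n)))) x)" by (rule K_cmult)
  also have "\<dots> = (\<lambda>x. lam\<^sup>2 * u (Suc n) x)"
    unfolding KQ[OF lp] u_def by (simp add: power2_eq_square mult.assoc)
  finally show ?thesis .
qed

lemma KKU: assumes x: "x \<in> space M" shows "K (K U) x = lam\<^sup>2 * U x"
proof -
  have "(\<lambda>n. K (K (u n)) x) \<longlonglongrightarrow> K (K U) x"
    unfolding LIMSEQ_iff
  proof (intro allI impI)
    fix r :: real assume r: "0 < r"
    define \<eta> where "\<eta> = r / (2 * (B\<^sup>2 + 1))"
    have "0 < B\<^sup>2" using B_pos[OF lp] by simp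
    hence "0 < 2 * (B\<^sup>2 + 1)" by (intro mult_pos_pos add_pos_pos) auto
    
    hence ep: "\<eta> > 0" unfolding \<eta>_def using r by (simp add: divide_pos_pos)
    obtain N where N: "\<forall>n\<ge>N. \<forall>x\<in>space M. \<bar>u n x - U x\<bar> \<le> \<eta>" using U_unif[OF ep] by blast
    have "\<forall>n\<ge>N. norm (K (K (u n)) x - K (K U) x) < r"
    proof (intro allI impI)
      fix n assume n: "N \<le> n"
      define v where "v y = u n y - U y" for y
      have vi: "integrable M v" unfolding v_def using u_int U_int by simp
      have vb: "\<And>y. y \<in> space M \<Longrightarrow> \<bar>v y\<bar> \<le> \<eta>" unfolding v_def using N n by auto
      have Kvb: "\<And>y. y \<in> space M \<Longrightarrow> \<bar>K v y\<bar> \<le> B * \<eta>" by (rule K_sup[OF vi vb])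
      have Kvi: "integrable M (K v)" using K_bm[OF vi] by (rule bm_integrable)
      have "K (K (u n)) x - K (K U) x = K (\<lambda>y. K (u n) y - K U y) x"
        using K_diff[OF bm_integrable[OF K_bm[OF u_int]] bm_integrable[OF K_bm[OF U_int]] x] by simp
      also have "\<dots> = K (K v) x"
        unfolding v_def by (rule K_cong) (use K_diff[OF u_int U_int] in auto)
      finally have eq: "K (K (u n)) x - K (K U) x = K (K v) x" .
      have "\<bar>K (K v) x\<bar> \<le> B * (B * \<eta>)" by (rule K_sup[OF Kvi Kvb x])
      also have "B * (B * \<eta>) < r"
      proof -
        have "B * (B * \<eta>) = B\<^sup>2 * r / (2 * (B\<^sup>2 + 1))" unfolding \<eta>_def by (simp add: power2_eq_square)
        also have "\<dots> < r" using r by (simp add: field_simps add_pos_nonneg)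
        finally show ?thesis .
      qed
      finally show "norm (K (K (u n)) x - K (K U) x) < r" using eq by simp
    qed
    thus "\<exists>no. \<forall>n\<ge>no. norm (K (K (u n)) x - K (K U) x) < r" by blast
  qed
  moreover have "(\<lambda>n. K (K (u n)) x) \<longlonglongrightarrow> lam\<^sup>2 * U x"
    unfolding KKu by (intro tendsto_intros LIMSEQ_Suc U_lim[OF x])
  ultimately show ?thesis by (rule LIMSEQ_unique)
qed

lemma u_sq: "(\<integral>x. (u n x)\<^sup>2 \<partial>M) = c (Suc (2 * n))"
  unfolding u_def c_def power2_eq_square Q_ip by (simp add: mult_2)

lemma U_notAE0: "\<not> (AE x in M. U x = 0)"
proof
  assume ae: "AE x in M. U x = 0"
  define \<eta> where "\<eta> = sqrt \<delta> / 2"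
  have ep: "\<eta> > 0" unfolding \<eta>_def using delta_pos[OF lp] by simp
  obtain N where N: "\<forall>n\<ge>N. \<forall>x\<in>space M. \<bar>u n x - U x\<bar> \<le> \<eta>" using U_unif[OF ep] by blast
  have ae2: "AE x in M. (u N x)\<^sup>2 \<le> \<eta>\<^sup>2"
    using ae AE_space
  proof eventually_elim
    case (elim x)
    hence "\<bar>u N x - U x\<bar> \<le> \<eta>" using N by blast
    hence "\<bar>u N x\<bar> \<le> \<eta>" using elim by simp
    hence "\<bar>u N x\<bar>\<^sup>2 \<le> \<eta>\<^sup>2" by (intro power_mono) auto
    thus ?case by simp
  qed
  have "(\<integral>x. (u N x)\<^sup>2 \<partial>M) \<le> (\<integral>x. \<eta>\<^sup>2 \<partial>M)"
  proof (rule integral_mono_AE)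
    show "integrable M (\<lambda>x. (u N x)\<^sup>2)" using bm_sq[OF u_bm] by (simp add: sq_integrable_def)
  qed (use ae2 in auto)
  also have "\<dots> = \<eta>\<^sup>2" by (simp add: prob_space)
  also have "\<dots> = \<delta> / 4" unfolding \<eta>_def using delta_pos[OF lp] by (simp add: power_divide)
  finally have "c (Suc (2 * N)) \<le> \<delta> / 4" unfolding u_sq .
  with c_lower[OF lp, of "Suc (2 * N)"] delta_pos[OF lp] show False by simp
qed


end


lemma eig_exists:
  "\<exists>f. f \<in> borel_measurable M \<and> bounded (f ` space M) \<and> (\<forall>x\<in>space M. 0 \<le> f x) \<and>
       \<not> (AE x in M. f x = 0) \<and> (AE x in M. K f x = lam * f x)"
proof (cases "lam = 0")
  case True
  have "L2norm M (K one) \<le> lam * L2norm M one" by (rule K_norm_le[OF one_sq])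
  hence "sqrt (\<integral>x. (K one x)\<^sup>2 \<partial>M) \<le> 0" using True by (simp add: L2norm_def)
  hence "(\<integral>x. (K one x)\<^sup>2 \<partial>M) = 0"
    by (metis antisym real_sqrt_eq_zero_cancel_iff real_sqrt_ge_zero Bochner_Integration.integral_nonneg zero_le_power2)
  hence "AE x in M. (K one x)\<^sup>2 = 0"
    using bm_sq[OF K_bm[OF one_int]]
    by (subst integral_nonneg_eq_0_iff_AE[symmetric]) (auto simp: sq_integrable_def)
  hence "AE x in M. K one x = lam * one x" using True by simp
  moreover have "\<not> (AE x in M. one x = 0)" by (simp add: one_def)
  moreover have "bounded (one ` space M)" by (auto simp: one_def bounded_real)
  ultimately show ?thesis by (intro exI[of _ one]) (auto simp: one_def)
next
  case False
  hence lp: "lam > 0" using lam_nonneg by simp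
  define f where "f x = K U x + lam * U x" for x
  have Ui: "integrable M U" by (rule U_int[OF lp])
  have KUi: "integrable M (K U)" using K_bm[OF Ui] by (rule bm_integrable)
  have fbm: "bm f" unfolding f_def by (intro bm_add bm_cmult K_bm Ui U_bm[OF lp])
  have fnn: "\<forall>x\<in>space M. 0 \<le> f x"
    unfolding f_def using lp U_nonneg[OF lp] by (auto intro!: add_nonneg_nonneg K_nonneg)
  have eig: "\<forall>x\<in>space M. K f x = lam * f x"
  proof
    fix x assume x: "x \<in> space M"
    have "K f x = K (K U) x + K (\<lambda>y. lam * U y) x"
      unfolding f_def using K_add[OF KUi _ x, of "\<lambda>y. lam * U y"] Ui by simp
    also have "\<dots> = lam\<^sup>2 * U x + lam * K U x" by (simp add: KKU[OF lp x] K_cmult)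
    also have "\<dots> = lam * f x" unfolding f_def by (simp add: power2_eq_square algebra_simps)
    finally show "K f x = lam * f x" .
  qed
  have "\<not> (AE x in M. f x = 0)"
  proof
    assume "AE x in M. f x = 0"
    hence "AE x in M. U x = 0"
      using AE_space
    proof eventually_elim
      case (elim x)
      have "0 \<le> K U x" using elim U_nonneg[OF lp] by (intro K_nonneg) auto
      moreover have "0 \<le> U x" using elim U_nonneg[OF lp] by auto
      ultimately have "lam * U x = 0" using elim unfolding f_def
        by (metis add_nonneg_eq_0_iff lp less_imp_le mult_nonneg_nonneg)
      thus ?case using lp by simp
    qed
    thus False using U_notAE0[OF lp] by simp
  qed
  moreover have "bounded (f ` space M)"
    using fbm unfolding bm_def bounded_real by auto
  ultimately show ?thesis using fbm fnn eig
    by (intro exI[of _ f]) (auto simp: bm_def)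
qed

end

lemma Im_neg_inv: "Im (- 1 / w) = Im w / (cmod w)\<^sup>2"
  by (simp add: Im_divide cmod_power2)

lemma main_aux:
  fixes M :: "'a measure" and a :: "'a \<Rightarrow> real" and s :: "'a \<Rightarrow> 'a \<Rightarrow> real"
    and mz :: "'a \<Rightarrow> complex" and z :: complex
  assumes prob: "prob_space M"
    and s_meas: "(\<lambda>(x, y). s x y) \<in> borel_measurable (M \<Otimes>\<^sub>M M)"
    and s_bdd: "bounded ((\<lambda>(x, y). s x y) ` (space M \<times> space M))"
    and s_nonneg: "\<And>x y. x \<in> space M \<Longrightarrow> y \<in> space M \<Longrightarrow> s x y \<ge> 0"
    and s_sym: "\<And>x y. x \<in> space M \<Longrightarrow> y \<in> space M \<Longrightarrow> s x y = s y x"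
    and sol: "qve_solution M a s z mz"
  shows "(\<exists>w. sq_integrable M w \<and> \<not> (AE x in M. w x = 0) \<and>
            (AE x in M. Fop M s mz w x = opnorm2 M (Fop M s mz) * w x))
       \<and> (\<exists>f. f \<in> borel_measurable M \<and> bounded (f ` space M) \<and> (\<forall>x\<in>space M. f x \<ge> 0) \<and>
            \<not> (AE x in M. f x = 0) \<and>
            (AE x in M. Fop M s mz f x = opnorm2 M (Fop M s mz) * f x))
       \<and> (\<forall>f. f \<in> borel_measurable M \<and> bounded (f ` space M) \<and> (\<forall>x\<in>space M. f x \<ge> 0) \<and>
            \<not> (AE x in M. f x = 0) \<and>
            (AE x in M. Fop M s mz f x = opnorm2 M (Fop M s mz) * f x) \<longrightarrow>
            opnorm2 M (Fop M s mz) =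
              1 - (\<integral>x. f x * cmod (mz x) \<partial>M) * Im z
                  / (\<integral>x. f x / cmod (mz x) * Im (mz x) \<partial>M))"
proof -
  have mz_meas[measurable]: "mz \<in> borel_measurable M" and mz_bdd: "bounded (mz ` space M)"
    and mz_im: "\<And>x. x \<in> space M \<Longrightarrow> Im (mz x) > 0"
    and mz_eq: "\<And>x. x \<in> space M \<Longrightarrow> - 1 / mz x = z + complex_of_real (a x) + (\<integral>y. complex_of_real (s x y) * mz y \<partial>M)"
    using sol unfolding qve_solution_def by auto
  have [measurable]: "(\<lambda>(x, y). s x y) \<in> borel_measurable (M \<Otimes>\<^sub>M M)" by (rule s_meas)
  obtain Cm where Cm: "\<And>x. x \<in> space M \<Longrightarrow> cmod (mz x) \<le> Cm"
    using mz_bdd unfolding bounded_iff by auto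
  obtain Cs where Cs: "\<And>x y. x \<in> space M \<Longrightarrow> y \<in> space M \<Longrightarrow> \<bar>s x y\<bar> \<le> Cs"
    using s_bdd unfolding bounded_real by fastforce
  define k where "k x y = cmod (mz x) * s x y * cmod (mz y)" for x y
  define B where "B = Cm * Cs * Cm"
  have kopI: "kop M k B"
  proof (intro kop.intro kop_axioms.intro prob)
    show "(\<lambda>(x, y). k x y) \<in> borel_measurable (M \<Otimes>\<^sub>M M)" unfolding k_def by measurable
    fix x y assume xy: "x \<in> space M" "y \<in> space M"
    show "0 \<le> k x y" unfolding k_def using s_nonneg[OF xy] by simp
    show "k x y = k y x" unfolding k_def using s_sym[OF xy] by simp
    have Cm0: "0 \<le> Cm" using Cm[OF xy(1)] norm_ge_zero[of "mz x"] by linarith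
    have "k x y \<le> Cm * \<bar>s x y\<bar> * Cm" unfolding k_def using s_nonneg[OF xy] Cm xy Cm0
      by (intro mult_mono) auto
    also have "\<dots> \<le> Cm * Cs * Cm" using Cs[OF xy] Cm0 abs_ge_zero[of "s x y"]
      by (intro mult_mono mult_nonneg_nonneg) auto
    finally show "k x y \<le> B" unfolding B_def .
  qed
  interpret kop M k B by (rule kopI)
  have FK: "Fop M s mz = K"
  proof (intro ext)
    fix w x
    have "K w x = (\<integral>y. cmod (mz x) * (s x y * cmod (mz y) * w y) \<partial>M)"
      unfolding K_def k_def by (simp add: mult.assoc)
    thus "Fop M s mz w x = K w x" unfolding Fop_def by simp
  qed
  have lamF: "opnorm2 M (Fop M s mz) = lam" unfolding FK lam_def ..
  have lamK: "opnorm2 M K = lam" unfolding lam_def ..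
  obtain f0 where f0: "f0 \<in> borel_measurable M" "bounded (f0 ` space M)" "\<forall>x\<in>space M. 0 \<le> f0 x"
    "\<not> (AE x in M. f0 x = 0)" "AE x in M. K f0 x = lam * f0 x"
    using eig_exists by blast
  have P1: "\<exists>w. sq_integrable M w \<and> \<not> (AE x in M. w x = 0) \<and>
            (AE x in M. Fop M s mz w x = opnorm2 M (Fop M s mz) * w x)"
  proof (intro exI[of _ f0] conjI)
    show "sq_integrable M f0" using f0(1,2) by (intro bm_sq) (auto simp: bm_def bounded_real)
  qed (use f0 in \<open>auto simp: lamF FK lamK\<close>)
  have P2: "\<exists>f. f \<in> borel_measurable M \<and> bounded (f ` space M) \<and> (\<forall>x\<in>space M. f x \<ge> 0) \<and>
            \<not> (AE x in M. f x = 0) \<and>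
            (AE x in M. Fop M s mz f x = opnorm2 M (Fop M s mz) * f x)"
    using f0 by (intro exI[of _ f0]) (auto simp: lamF FK lamK)
  have P3: "opnorm2 M (Fop M s mz) =
              1 - (\<integral>x. f x * cmod (mz x) \<partial>M) * Im z
                  / (\<integral>x. f x / cmod (mz x) * Im (mz x) \<partial>M)"
    if f: "f \<in> borel_measurable M" "bounded (f ` space M)" "\<forall>x\<in>space M. f x \<ge> 0"
            "\<not> (AE x in M. f x = 0)" "AE x in M. Fop M s mz f x = opnorm2 M (Fop M s mz) * f x"
    for f
  proof -
    have [measurable]: "f \<in> borel_measurable M" by (rule f(1))
    have fbm: "bm f" using f(1,2) by (auto simp: bm_def bounded_real)
    have fi: "integrable M f" using fbm by (rule bm_integrable)
    have feig: "AE x in M. K f x = lam * f x" using f(5) by (simp add: lamF FK lamK)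
    define g where "g x = Im (mz x) / cmod (mz x)" for x
    have cpos: "cmod (mz x) > 0" if x: "x \<in> space M" for x
    proof -
      have "mz x \<noteq> 0" using mz_im[OF x] by auto
      thus ?thesis by simp
    qed
    have gpos: "\<And>x. x \<in> space M \<Longrightarrow> g x > 0" unfolding g_def using mz_im cpos by simp
    have gbm: "bm g"
    proof -
      have "\<forall>x\<in>space M. \<bar>g x\<bar> \<le> 1"
      proof
        fix x assume x: "x \<in> space M"
        have "\<bar>Im (mz x)\<bar> \<le> cmod (mz x)" by (rule abs_Im_le_cmod)
        thus "\<bar>g x\<bar> \<le> 1" unfolding g_def using cpos[OF x] by (simp add: abs_div divide_le_eq_1)
      qed
      moreover have "g \<in> borel_measurable M" unfolding g_def by measurable
      ultimately show ?thesis unfolding bm_def by blast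
    qed
    have gi: "integrable M g" using gbm by (rule bm_integrable)
    have cbm: "bm (\<lambda>x. cmod (mz x))" unfolding bm_def using Cm by auto
    have si: "integrable M (\<lambda>y. complex_of_real (s x y) * mz y)" if x: "x \<in> space M" for x
    proof (rule integrable_const_bound[where B="Cs * Cm"])
      show "(\<lambda>y. complex_of_real (s x y) * mz y) \<in> borel_measurable M" using x by measurable
      show "AE y in M. norm (complex_of_real (s x y) * mz y) \<le> Cs * Cm"
      proof (rule AE_I2)
        fix y assume y: "y \<in> space M"
        have "norm (complex_of_real (s x y) * mz y) = \<bar>s x y\<bar> * cmod (mz y)" by (simp add: norm_mult)
        also have "\<dots> \<le> Cs * Cm" using Cs[OF x y] Cm[OF y] by (intro mult_mono) auto
        finally show "norm (complex_of_real (s x y) * mz y) \<le> Cs * Cm" .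
      qed
    qed
    have geq: "g x = cmod (mz x) * Im z + K g x" if x: "x \<in> space M" for x
    proof -
      have e1: "Im (- 1 / mz x) = Im z + Im (\<integral>y. complex_of_real (s x y) * mz y \<partial>M)"
        using arg_cong[OF mz_eq[OF x], of Im] by simp
      have e2: "Im (\<integral>y. complex_of_real (s x y) * mz y \<partial>M) = (\<integral>y. Im (complex_of_real (s x y) * mz y) \<partial>M)"
        using integral_Im[OF si[OF x]] by simp
      have "Im (mz x) / (cmod (mz x))\<^sup>2 = Im z + (\<integral>y. s x y * Im (mz y) \<partial>M)"
        using e1 e2 unfolding Im_neg_inv by simp
      hence "g x = cmod (mz x) * Im z + cmod (mz x) * (\<integral>y. s x y * Im (mz y) \<partial>M)"
        unfolding g_def using cpos[OF x] by (simp add: power2_eq_square field_simps)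
      moreover have "K g x = cmod (mz x) * (\<integral>y. s x y * Im (mz y) \<partial>M)"
      proof -
        have "K g x = (\<integral>y. cmod (mz x) * (s x y * Im (mz y)) \<partial>M)"
          unfolding K_def k_def g_def using cpos
          by (intro Bochner_Integration.integral_cong) (auto simp: field_simps)
        thus ?thesis by simp
      qed
      ultimately show ?thesis by simp
    qed
    have fgi: "integrable M (\<lambda>x. f x * g x)" using bm_mult[OF fbm gbm] by (rule bm_integrable)
    have fci: "integrable M (\<lambda>x. f x * cmod (mz x))" using bm_mult[OF fbm cbm] by (rule bm_integrable)
    have fKgi: "integrable M (\<lambda>x. f x * K g x)" using bm_mult[OF fbm K_bm[OF gi]] by (rule bm_integrable)
    define D where "D = (\<integral>x. f x * g x \<partial>M)"
    define N where "N = (\<integral>x. f x * cmod (mz x) \<partial>M)"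
    have "D = (\<integral>x. Im z * (f x * cmod (mz x)) + f x * K g x \<partial>M)"
      unfolding D_def using geq by (intro Bochner_Integration.integral_cong) (auto simp: algebra_simps)
    also have "\<dots> = Im z * N + (\<integral>x. f x * K g x \<partial>M)"
      unfolding N_def using fci fKgi by simp
    also have "(\<integral>x. f x * K g x \<partial>M) = (\<integral>x. K f x * g x \<partial>M)"
      using K_adj[OF fi gi] by simp
    also have "\<dots> = (\<integral>x. lam * (f x * g x) \<partial>M)"
    proof (rule integral_cong_AE)
      show "(\<lambda>x. K f x * g x) \<in> borel_measurable M" using K_meas[OF f(1)] bm_meas[OF gbm] by measurable
      show "(\<lambda>x. lam * (f x * g x)) \<in> borel_measurable M" using bm_meas[OF gbm] by measurable
      show "AE x in M. K f x * g x = lam * (f x * g x)" using feig by eventually_elim simp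
    qed
    also have "\<dots> = lam * D" unfolding D_def by simp
    finally have DN: "D = Im z * N + lam * D" .
    have D0: "D > 0"
    proof -
      have fg0: "\<And>x. x \<in> space M \<Longrightarrow> 0 \<le> f x * g x"
        using f(3) gpos by (meson less_imp_le mult_nonneg_nonneg)
      have nn: "AE x in M. 0 \<le> f x * g x" using fg0 by (intro AE_I2)
      have "D \<ge> 0" unfolding D_def using fg0 by (intro Bochner_Integration.integral_nonneg)
      moreover have "D \<noteq> 0"
      proof
        assume "D = 0"
        hence "AE x in M. f x * g x = 0" unfolding D_def using integral_nonneg_eq_0_iff_AE[OF fgi nn] by simp
        hence "AE x in M. f x = 0" using AE_space
        proof eventually_elim
          case (elim x) thus ?case using gpos[of x] by simp
        qed
        thus False using f(4) by simp
      qed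
      ultimately show ?thesis by simp
    qed
    have den: "(\<integral>x. f x / cmod (mz x) * Im (mz x) \<partial>M) = D"
      unfolding D_def g_def by (intro Bochner_Integration.integral_cong) auto
    have "lam = 1 - N * Im z / D" using DN D0 by (simp add: field_simps)
    thus ?thesis unfolding lamF den N_def .
  qed
  show ?thesis using P1 P2 P3 by blast
qed

theorem mainTheorem5:
  fixes M :: "'a measure" and a :: "'a \<Rightarrow> real" and s :: "'a \<Rightarrow> 'a \<Rightarrow> real"
    and m :: "complex \<Rightarrow> 'a \<Rightarrow> complex" and z :: complex
  assumes prob: "prob_space M"
    and a_meas: "a \<in> borel_measurable M" and a_bdd: "bounded (a ` space M)"
    and s_meas: "(\<lambda>(x, y). s x y) \<in> borel_measurable (M \<Otimes>\<^sub>M M)"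
    and s_bdd: "bounded ((\<lambda>(x, y). s x y) ` (space M \<times> space M))"
    and s_nonneg: "\<And>x y. x \<in> space M \<Longrightarrow> y \<in> space M \<Longrightarrow> s x y \<ge> 0"
    and s_sym: "\<And>x y. x \<in> space M \<Longrightarrow> y \<in> space M \<Longrightarrow> s x y = s y x"
    and m_sol: "\<And>w. Im w > 0 \<Longrightarrow> qve_solution M a s w (m w)"
    and m_uniq: "\<And>w u. Im w > 0 \<Longrightarrow> qve_solution M a s w u \<Longrightarrow> \<forall>x\<in>space M. u x = m w x"
    and z: "Im z > 0"
  shows "(\<exists>w. sq_integrable M w \<and> \<not> (AE x in M. w x = 0) \<and>
            (AE x in M. Fop M s (m z) w x = opnorm2 M (Fop M s (m z)) * w x))
       \<and> (\<exists>f. f \<in> borel_measurable M \<and> bounded (f ` space M) \<and> (\<forall>x\<in>space M. f x \<ge> 0) \<and>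
            \<not> (AE x in M. f x = 0) \<and>
            (AE x in M. Fop M s (m z) f x = opnorm2 M (Fop M s (m z)) * f x))
       \<and> (\<forall>f. f \<in> borel_measurable M \<and> bounded (f ` space M) \<and> (\<forall>x\<in>space M. f x \<ge> 0) \<and>
            \<not> (AE x in M. f x = 0) \<and>
            (AE x in M. Fop M s (m z) f x = opnorm2 M (Fop M s (m z)) * f x) \<longrightarrow>
            opnorm2 M (Fop M s (m z)) =
              1 - (\<integral>x. f x * cmod (m z x) \<partial>M) * Im z
                  / (\<integral>x. f x / cmod (m z x) * Im (m z x) \<partial>M))"
  using main_aux[OF prob s_meas s_bdd s_nonneg s_sym m_sol[OF z]] .

end
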